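(* In the setting of the Pairwise Learning algorithm described in the context, suppose that every $1$-dimensional reduced graph of $G$ contains exactly one source component and that for every $\theta\neq\theta^*$ and every $1$-dimensional reduced graph $\mathcal{H}_1$ with source component $\mathcal{S}_{\mathcal{H}_1}$, $\sum_{j\in\mathcal{S}_{\mathcal{H}_1}}D(\ell_j(\cdot\mid\theta^* )\|\ell_j(\cdot\mid\theta))\neq0$. Let $i$ be a non-faulty agent. If there exists $\tilde\theta\in\Theta$ such that for every $\theta\neq\tilde\theta$, $r_t^i(\tilde\theta,\theta)\to+\infty$ almost surely and $r_t^i(\theta,\tilde\theta)\to-\infty$ almost surely, then $\tilde\theta=\theta^*$.
   Context: Network: $n$ agents on a directed graph $G=(\mathcal{V},\mathcal{E})$, $\mathcal{V}=\{1,\dots,n\}$, $\mathcal{I}_i$ the incoming neighbors of $i$; synchronous iterations; an unknown set of at most $f$ Byzantine agents behaving arbitrarily; non-faulty agents know $f$; missing messages are replaced by a default value. Observations: $\Theta=\{\theta_1,\dots,\theta_m\}$ with unknown true state $\theta^*$; agent $i$ has finite signal space $\mathcal{S}_i$ and likelihoods $\ell_i(\cdot\mid\theta)$ with full support; in iteration $t$ it observes $s_t^i\sim\ell_i(\cdot\mid\theta^* )$, independently across agents and iterations; $\ell_i(s_{1,t}^i\mid\theta)=\prod_{r=1}^t\ell_i(s_r^i\mid\theta)$. $D$ is the Kullback–Leibler divergence. A $1$-dimensional reduced graph of $G$ is obtained by removing all faulty nodes and incident links and then, for each non-faulty node, up to $f$ additional incoming links; a source component is a strongly connected component with no incoming links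 from outside. Pairwise Learning at non-faulty agent $i$: $r_0^i(\theta_1,\theta_2)=0$ for all ordered pairs $\theta_1\ne\theta_2$; in iteration $t\ge1$, for each ordered pair, transmit $r_{t-1}^i(\theta_1,\theta_2)$, observe $s_t^i$, receive $\tilde r_{t-1}^j(\theta_1,\theta_2)$ from all $j\in\mathcal{I}_i$, discard the $f$ smallest and $f$ largest received values (remaining index set $\mathcal{I}_i^*[t]$), and set $r_t^i(\theta_1,\theta_2)=\frac{\sum_{j\in\mathcal{I}_i^*[t]}\tilde r_{t-1}^j(\theta_1,\theta_2)+r_{t-1}^i(\theta_1,\theta_2)}{|\mathcal{I}_i^*[t]|+1}+\log\frac{\ell_i(s_{1,t}^i\mid\theta_1)}{\ell_i(s_{1,t}^i\mid\theta_2)}$. *)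

theory Defs
  imports "HOL-Probability.Probability"
begin

definition incoming :: "('v \<times> 'v) set \<Rightarrow> 'v \<Rightarrow> 'v set" where
  "incoming E i = {j. (j, i) \<in> E \<and> j \<noteq> i}"

definition trim_sum :: "nat \<Rightarrow> real multiset \<Rightarrow> real" where
  "trim_sum f A = sum_list (take (size A - 2 * f) (drop f (sorted_list_of_multiset A)))"

(* Pairwise Learning state r_t^i(theta1,theta2)(omega).
   F: Byzantine agents; adv t j i th1 th2 w: the (arbitrary) value that faulty agent j
   sends to agent i in iteration t for the pair (th1,th2);
   lik i s th = ell_i(s | th); sig t i w = s_t^i. *)
primrec PL :: "('v \<times> 'v) set \<Rightarrow> 'v set \<Rightarrow> nat \<Rightarrow>
      (nat \<Rightarrow> 'v \<Rightarrow> 'v \<Rightarrow> 'th \<Rightarrow> 'th \<Rightarrow> 'w \<Rightarrow> real) \<Rightarrow>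
      ('v \<Rightarrow> 's \<Rightarrow> 'th \<Rightarrow> real) \<Rightarrow> (nat \<Rightarrow> 'v \<Rightarrow> 'w \<Rightarrow> 's) \<Rightarrow>
      nat \<Rightarrow> 'v \<Rightarrow> 'th \<Rightarrow> 'th \<Rightarrow> 'w \<Rightarrow> real" where
  "PL E F f adv lik sig 0 = (\<lambda>i th1 th2 w. 0)"
| "PL E F f adv lik sig (Suc t) = (\<lambda>i th1 th2 w.
     (let A = image_mset (\<lambda>j. if j \<in> F then adv (Suc t) j i th1 th2 w
                               else PL E F f adv lik sig t j th1 th2 w)
                         (mset_set (incoming E i))
      in (trim_sum f A + PL E F f adv lik sig t i th1 th2 w) / (real (size A - 2 * f) + 1)
         + ln ((\<Prod>r\<in>{1..Suc t}. lik i (sig r i w) th1) / (\<Prod>r\<in>{1..Suc t}. lik i (sig r i w) th2))))"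

definition reduced_graph1 :: "'v set \<Rightarrow> ('v \<times> 'v) set \<Rightarrow> 'v set \<Rightarrow> nat \<Rightarrow> ('v \<times> 'v) set \<Rightarrow> bool" where
  "reduced_graph1 V E F f H \<longleftrightarrow>
     H \<subseteq> {(j, i). (j, i) \<in> E \<and> j \<noteq> i \<and> j \<in> V - F \<and> i \<in> V - F} \<and>
     (\<forall>i\<in>V - F. card {j. (j, i) \<in> E \<and> j \<noteq> i \<and> j \<in> V - F \<and> (j, i) \<notin> H} \<le> f)"

definition source_component :: "'v set \<Rightarrow> ('v \<times> 'v) set \<Rightarrow> 'v set \<Rightarrow> bool" where
  "source_component W H C \<longleftrightarrow>
     C \<noteq> {} \<and> C \<subseteq> W \<and>
     (\<forall>x\<in>C. \<forall>y\<in>C. (x, y) \<in> H\<^sup>*) \<and>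
     (\<forall>x\<in>C. \<forall>y\<in>W. (x, y) \<in> H\<^sup>* \<and> (y, x) \<in> H\<^sup>* \<longrightarrow> y \<in> C) \<and>
     (\<forall>j i. (j, i) \<in> H \<and> i \<in> C \<longrightarrow> j \<in> C)"

definition KL :: "'s set \<Rightarrow> ('s \<Rightarrow> real) \<Rightarrow> ('s \<Rightarrow> real) \<Rightarrow> real" where
  "KL S p q = (\<Sum>s\<in>S. p s * ln (p s / q s))"

end

theory Submission
  imports Defs "HOL-Probability.Probability"
begin


lemma (in prob_space) indep_sets_reindex:
  assumes ind: "indep_sets F (g ` I)" and inj: "inj_on g I"
  shows "indep_sets (\<lambda>i. F (g i)) I"
  unfolding indep_sets_def
proof (intro conjI ballI allI impI)
  fix i assume "i \<in> I" then show "F (g i) \<subseteq> events" using ind unfolding indep_sets_def by auto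
next
  fix J A assume J: "J \<subseteq> I" "J \<noteq> {}" "finite J" and A: "A \<in> Pi J (\<lambda>i. F (g i))"
  define A' where "A' = (\<lambda>x. A (inv_into J g x))"
  have injJ: "inj_on g J" using inj J by (meson inj_on_subset)
  have A'g: "A' (g j) = A j" if "j \<in> J" for j using that injJ by (simp add: A'_def)
  have "A' \<in> Pi (g ` J) F" using A A'g by auto
  moreover have "g ` J \<subseteq> g ` I" "g ` J \<noteq> {}" "finite (g ` J)" using J by auto
  ultimately have "prob (\<Inter>j\<in>g ` J. A' j) = (\<Prod>j\<in>g ` J. prob (A' j))"
    using ind unfolding indep_sets_def by blast
  moreover have "(\<Inter>j\<in>g ` J. A' j) = (\<Inter>j\<in>J. A j)" using A'g by auto
  moreover have "(\<Prod>j\<in>g ` J. prob (A' j)) = (\<Prod>j\<in>J. prob (A j))"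
    using A'g injJ by (simp add: prod.reindex)
  ultimately show "prob (\<Inter>j\<in>J. A j) = (\<Prod>j\<in>J. prob (A j))" by simp
qed

lemma (in prob_space) indep_vars_reindex:
  assumes ind: "indep_vars M' X (g ` I)" and inj: "inj_on g I"
  shows "indep_vars (\<lambda>i. M' (g i)) (\<lambda>i. X (g i)) I"
  using ind unfolding indep_vars_def2
  by (auto intro: indep_sets_reindex[OF _ inj])

lemma sum_list_le_len: "(\<And>x. x \<in> set xs \<Longrightarrow> x \<le> (m::real)) \<Longrightarrow> sum_list xs \<le> real (length xs) * m"
  by (induction xs) (force simp: algebra_simps intro: add_mono)+

lemma trim_le:
  fixes A :: "real multiset"
  assumes "size (filter_mset (\<lambda>x. x > m) A) \<le> f"
  shows "trim_sum f A \<le> real (size A - 2*f) * m"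
proof -
  define L where "L = sorted_list_of_multiset A"
  have sL: "sorted L" and mL: "mset L = A" by (auto simp: L_def)
  have lenL: "length L = size A" using mL by (metis size_mset)
  define T where "T = take (size A - 2 * f) (drop f L)"
  have lenT: "length T = size A - 2*f" using lenL by (simp add: T_def)
  have "x \<le> m" if x: "x \<in> set T" for x
  proof (rule ccontr)
    assume "\<not> x \<le> m" hence xm: "x > m" by simp
    from x obtain p where p: "p < length T" "T ! p = x" by (auto simp: in_set_conv_nth)
    define q where "q = f + p"
    have q: "q < length L" "L ! q = x" "q + f < length L" using p lenT lenL
      by (auto simp: T_def q_def)
    have all: "\<forall>y\<in>set (drop q L). y > m"
    proof
      fix y assume "y \<in> set (drop q L)"
      then obtain k where k: "k < length L - q" "drop q L ! k = y" by (auto simp: in_set_conv_nth)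
      have "L ! q \<le> L ! (q + k)" using sL k q by (intro sorted_nth_mono) auto
      with k q xm show "y > m" by auto
    qed
    have "length (drop q L) \<le> length (filter (\<lambda>x. x > m) L)"
    proof -
      have "length (drop q L) = length (filter (\<lambda>x. x > m) (drop q L))"
        using all by (simp add: filter_True)
      also have "\<dots> \<le> length (filter (\<lambda>x. x > m) (take q L @ drop q L))" unfolding filter_append length_append by simp
      finally show ?thesis by (metis append_take_drop_id)
    qed
    also have "length (filter (\<lambda>x. x > m) L) = size (filter_mset (\<lambda>x. x > m) A)"
      by (metis mL mset_filter size_mset)
    finally have "length L - q \<le> f" using assms by simp
    with q show False by simp
  qed
  then have "sum_list T \<le> real (length T) * m" by (rule sum_list_le_len)
  then show ?thesis using lenT by (simp add: trim_sum_def T_def L_def)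
qed



lemma ln_lt_minus_one: "0 < (x::real) \<Longrightarrow> x \<noteq> 1 \<Longrightarrow> ln x < x - 1"
  using ln_le_minus_one ln_eq_minus_one by (metis order_le_less)

lemma ev_nonpos:
  fixes M :: "'w measure" and Y :: "nat \<Rightarrow> 'w \<Rightarrow> 's" and p q :: "'s \<Rightarrow> real"
  assumes P: "prob_space M" and Sfin: "finite S"
   and ppos: "\<And>s. s\<in>S \<Longrightarrow> p s > 0" and qpos: "\<And>s. s \<in> S \<Longrightarrow> q s > 0"
   and psum: "(\<Sum>s\<in>S. p s) = 1" and qsum: "(\<Sum>s\<in>S. q s) = 1"
   and meas: "\<And>t. t \<ge> 1 \<Longrightarrow> Y t \<in> measurable M (count_space S)"
   and ind: "prob_space.indep_vars M (\<lambda>_. count_space S) Y {1..}"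
   and dist: "\<And>t s. t\<ge>1 \<Longrightarrow> s\<in>S \<Longrightarrow> measure M {w\<in>space M. Y t w = s} = p s"
  shows "AE w in M. eventually (\<lambda>t. (\<Sum>r\<in>{1..t}. ln (q (Y r w) / p (Y r w))) \<le> 0) sequentially"
proof -
  interpret prob_space M by (rule P)
  define g where "g = (\<lambda>s. ln (q s / p s))"
  have Yin: "Y t w \<in> S" if "t \<ge> 1" "w \<in> space M" for t w
    using measurable_space[OF meas[OF that(1)] that(2)] by simp
  show ?thesis
  proof (cases "\<forall>s\<in>S. q s = p s")
    case True
    show ?thesis
    proof (rule AE_I2)
      fix w assume w: "w \<in> space M"
      have "(\<Sum>r\<in>{1..t}. ln (q (Y r w) / p (Y r w))) = 0" for t
        using True Yin[OF _ w] ppos Yin[OF _ w] by (intro sum.neutral) auto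
      then show "eventually (\<lambda>t. (\<Sum>r\<in>{1..t}. ln (q (Y r w) / p (Y r w))) \<le> 0) sequentially"
        by simp
    qed
  next
    case False
    then obtain s0 where s0: "s0 \<in> S" "q s0 \<noteq> p s0" by auto
    define Eg where "Eg = (\<Sum>s\<in>S. g s * p s)"
    have "Eg < (\<Sum>s\<in>S. q s - p s)"
      unfolding Eg_def
    proof (rule sum_strict_mono_ex1[OF Sfin])
      show "\<forall>s\<in>S. g s * p s \<le> q s - p s"
      proof
        fix s assume s: "s \<in> S"
        have "g s \<le> q s / p s - 1" unfolding g_def using ppos[OF s] qpos[OF s]
          by (intro ln_le_minus_one) simp
        then have "g s * p s \<le> (q s / p s - 1) * p s" using ppos[OF s] by (intro mult_right_mono) auto
        moreover have "(q s / p s - 1) * p s = q s - p s" using ppos[OF s] by (simp add: left_diff_distrib)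
        ultimately show "g s * p s \<le> q s - p s" by simp
      qed
      have "g s0 < q s0 / p s0 - 1" unfolding g_def using ppos[OF s0(1)] qpos[OF s0(1)] s0(2)
        by (intro ln_lt_minus_one) (auto simp: field_simps)
      then have "g s0 * p s0 < (q s0 / p s0 - 1) * p s0" using ppos[OF s0(1)] by (intro mult_strict_right_mono) auto
      moreover have "(q s0 / p s0 - 1) * p s0 = q s0 - p s0" using ppos[OF s0(1)] by (simp add: left_diff_distrib)
      ultimately show "\<exists>s\<in>S. g s * p s < q s - p s" using s0(1) by auto
    qed
    also have "\<dots> = 0" using psum qsum by (simp add: sum_subtractf)
    finally have Egneg: "Eg < 0" .
    have gmeas: "g \<in> borel_measurable (count_space S)" by simp
    have rv: "(\<lambda>w. g (Y t w)) \<in> borel_measurable M" if "t \<ge> 1" for t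
      using measurable_compose[OF meas[OF that] gmeas] by (simp add: comp_def)
    have expect: "expectation (\<lambda>w. g (Y t w)) = Eg" if t: "t \<ge> 1" for t
    proof -
      have sets: "{w\<in>space M. Y t w = s} \<in> sets M" if "s \<in> S" for s
      proof -
        have "Y t -` {s} \<inter> space M \<in> sets M" using that by (intro measurable_sets[OF meas[OF t]]) auto
        moreover have "Y t -` {s} \<inter> space M = {w\<in>space M. Y t w = s}" by auto
        ultimately show ?thesis by simp
      qed
      have "(\<integral>w. g (Y t w) \<partial>M) = (\<integral>w. (\<Sum>s\<in>S. g s * indicator {w\<in>space M. Y t w = s} w) \<partial>M)"
      proof (rule Bochner_Integration.integral_cong[OF refl])
        fix w assume w: "w \<in> space M"
        have "(\<Sum>s\<in>S. g s * indicator {w\<in>space M. Y t w = s} w) = (\<Sum>s\<in>S. if Y t w = s then g s else 0)"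
          using w by (intro sum.cong) (auto simp: indicator_def)
        also have "\<dots> = g (Y t w)" using Yin[OF t w] Sfin by (simp add: sum.delta)
        finally show "g (Y t w) = (\<Sum>s\<in>S. g s * indicator {w\<in>space M. Y t w = s} w)" by simp
      qed
      also have "\<dots> = (\<Sum>s\<in>S. (\<integral>w. g s * indicator {w\<in>space M. Y t w = s} w \<partial>M))"
        using sets by (intro Bochner_Integration.integral_sum integrable_mult_right integrable_indicator) (auto simp: emeasure_eq_measure)
      also have "\<dots> = (\<Sum>s\<in>S. g s * p s)"
        using sets dist[OF t] by (intro sum.cong) auto
      finally show ?thesis by (simp add: Eg_def)
    qed
    define C where "C = (\<Sum>s\<in>S. \<bar>g s\<bar>) + 1"
    have gC: "\<bar>g s\<bar> \<le> C" if "s \<in> S" for s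
    proof -
      have "\<bar>g s\<bar> \<le> (\<Sum>s\<in>S. \<bar>g s\<bar>)" using that Sfin by (intro member_le_sum) auto
      then show ?thesis by (simp add: C_def)
    qed
    have Cpos: "C > 0" unfolding C_def by (smt (verit) sum_nonneg abs_ge_zero)
    define c where "c = Eg\<^sup>2 / (2 * C\<^sup>2)"
    have cpos: "c > 0" using Cpos Egneg by (simp add: c_def)
    define A where "A = (\<lambda>t. {w\<in>space M. 0 \<le> (\<Sum>r\<in>{1..t}. g (Y r w))})"
    have Asets: "A t \<in> sets M" for t
    proof -
      have "(\<lambda>w. \<Sum>r\<in>{1..t}. g (Y r w)) \<in> borel_measurable M"
        using rv by (intro borel_measurable_sum) auto
      then show ?thesis unfolding A_def by measurable
    qed
    have Abound: "measure M (A t) \<le> exp (- c * real t)" for t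
    proof (cases "t = 0")
      case True then show ?thesis by simp
    next
      case False
      interpret H: Hoeffding_ineq M "{1..t}" "\<lambda>r w. g (Y r w)" "\<lambda>_. -C" "\<lambda>_. C" "real t * Eg"
      proof unfold_locales
        show "finite {1..t}" by simp
        have "indep_vars (\<lambda>_. count_space S) Y {1..t}" using ind by (rule indep_vars_subset) auto
        then show "indep_vars (\<lambda>_. borel) (\<lambda>r w. g (Y r w)) {1..t}"
          by (rule indep_vars_compose2) simp
      next
        fix r assume r: "r \<in> {1..t}"
        show "AE x in M. g (Y r x) \<in> {- C..C}"
          using gC Yin r by (intro AE_I2) (fastforce simp: abs_le_iff)
      next
        show "real t * Eg \<equiv> (\<Sum>r\<in>{1..t}. expectation (\<lambda>w. g (Y r w)))"
          using expect by simp
      qed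
      have le: "measure M {x\<in>space M. (\<Sum>r\<in>{1..t}. g (Y r x)) \<ge> real t * Eg + (- real t * Eg)}
          \<le> exp (-2 * (- real t * Eg)\<^sup>2 / (\<Sum>r\<in>{1..t}. (C - - C)\<^sup>2))"
        using Egneg Cpos False by (intro H.Hoeffding_ineq_ge) (auto simp: mult_nonneg_nonpos)
      have "exp (-2 * (- real t * Eg)\<^sup>2 / (\<Sum>r\<in>{1..t}. (C - - C)\<^sup>2)) = exp (- c * real t)"
        using False Cpos by (simp add: c_def power2_eq_square field_simps)
      with le show ?thesis by (simp add: A_def)
    qed
    have summ: "summable (\<lambda>t. measure M (A t))"
    proof (rule summable_comparison_test')
      show "summable (\<lambda>t. exp (- c) ^ t)" using cpos by (intro summable_geometric) simp
      fix t show "norm (measure M (A t)) \<le> exp (- c) ^ t"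
        using Abound[of t] by (simp add: exp_of_nat_mult[symmetric] mult.commute)
    qed
    have "AE w in M. eventually (\<lambda>t. w \<in> space M - A t) sequentially"
      by (rule borel_cantelli_AE1[OF Asets _ summ]) (simp add: emeasure_eq_measure)
    then show ?thesis
    proof (rule eventually_mono)
      fix w assume "eventually (\<lambda>t. w \<in> space M - A t) sequentially"
      then show "eventually (\<lambda>t. (\<Sum>r\<in>{1..t}. ln (q (Y r w) / p (Y r w))) \<le> 0) sequentially"
        by (rule eventually_mono) (auto simp: A_def g_def)
    qed
  qed
qed



theorem proposition1:
  fixes V :: "'v set" and E :: "('v \<times> 'v) set" and F :: "'v set" and f :: nat
    and Theta :: "'th set" and thstar :: 'th
    and S :: "'v \<Rightarrow> 's set" and lik :: "'v \<Rightarrow> 's \<Rightarrow> 'th \<Rightarrow> real"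
    and M :: "'w measure" and sig :: "nat \<Rightarrow> 'v \<Rightarrow> 'w \<Rightarrow> 's"
    and adv :: "nat \<Rightarrow> 'v \<Rightarrow> 'v \<Rightarrow> 'th \<Rightarrow> 'th \<Rightarrow> 'w \<Rightarrow> real"
    and i :: 'v and thtilde :: 'th
  assumes V_fin: "finite V"
    and E_sub: "E \<subseteq> V \<times> V"
    and F_sub: "F \<subseteq> V" and F_card: "card F \<le> f"
    and Theta_fin: "finite Theta" and thstar_in: "thstar \<in> Theta"
    and S_fin: "\<And>j. j \<in> V \<Longrightarrow> finite (S j)"
    and S_ne: "\<And>j. j \<in> V \<Longrightarrow> S j \<noteq> {}"
    and lik_pos: "\<And>j s th. j \<in> V \<Longrightarrow> s \<in> S j \<Longrightarrow> th \<in> Theta \<Longrightarrow> lik j s th > 0"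
    and lik_sum: "\<And>j th. j \<in> V \<Longrightarrow> th \<in> Theta \<Longrightarrow> (\<Sum>s\<in>S j. lik j s th) = 1"
    and M_prob: "prob_space M"
    and sig_meas: "\<And>t j. t \<ge> 1 \<Longrightarrow> j \<in> V \<Longrightarrow> sig t j \<in> measurable M (count_space (S j))"
    and sig_indep: "prob_space.indep_vars M (\<lambda>(t, j). count_space (S j)) (\<lambda>(t, j). sig t j)
                      ({1..} \<times> V)"
    and sig_distr: "\<And>t j s. t \<ge> 1 \<Longrightarrow> j \<in> V \<Longrightarrow> s \<in> S j \<Longrightarrow>
                      measure M {w \<in> space M. sig t j w = s} = lik j s thstar"
    and one_source: "\<And>H. reduced_graph1 V E F f H \<Longrightarrow> \<exists>!C. source_component (V - F) H C"
    and identif: "\<And>th H C. th \<in> Theta \<Longrightarrow> th \<noteq> thstar \<Longrightarrow> reduced_graph1 V E F f H \<Longrightarrow>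
                      source_component (V - F) H C \<Longrightarrow>
                      (\<Sum>j\<in>C. KL (S j) (\<lambda>s. lik j s thstar) (\<lambda>s. lik j s th)) \<noteq> 0"
    and i_nonfaulty: "i \<in> V - F"
    and thtilde_in: "thtilde \<in> Theta"
    and conv: "\<And>th. th \<in> Theta \<Longrightarrow> th \<noteq> thtilde \<Longrightarrow>
                 (AE w in M. filterlim (\<lambda>t. PL E F f adv lik sig t i thtilde th w) at_top sequentially) \<and>
                 (AE w in M. filterlim (\<lambda>t. PL E F f adv lik sig t i th thtilde w) at_bot sequentially)"
  shows "thtilde = thstar"

proof (rule ccontr)
  assume ne: "thtilde \<noteq> thstar"
  interpret prob_space M by (rule M_prob)
  define Pt where "Pt = (\<lambda>t j w. PL E F f adv lik sig t j thtilde thstar w)"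
  define Mx where "Mx = (\<lambda>t w. Max ((\<lambda>j. Pt t j w) ` (V - F)))"
  define ell where "ell = (\<lambda>j t w. \<Sum>r\<in>{1..t}. ln (lik j (sig r j w) thtilde / lik j (sig r j w) thstar))"
  have Ffin: "finite F" using F_sub V_fin by (rule finite_subset)
  have VFfin: "finite (V - F)" using V_fin by simp
  have Pt_le_Mx: "Pt t j w \<le> Mx t w" if "j \<in> V - F" for t j w
    unfolding Mx_def using that VFfin by (intro Max_ge) auto
  have sigin: "sig r j w \<in> S j" if "r \<ge> 1" "j \<in> V" "w \<in> space M" for r j w
    using measurable_space[OF sig_meas[OF that(1,2)] that(3)] by simp
  have logterm: "ln ((\<Prod>r\<in>{1..t}. lik j (sig r j w) thtilde) / (\<Prod>r\<in>{1..t}. lik j (sig r j w) thstar))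
      = ell j t w" if j: "j \<in> V" and w: "w \<in> space M" for j t w
  proof -
    have pos: "lik j (sig r j w) th > 0" if "r \<in> {1..t}" "th \<in> Theta" for r th
      using that sigin[OF _ j w] by (intro lik_pos j) auto
    have "ln ((\<Prod>r\<in>{1..t}. lik j (sig r j w) thtilde) / (\<Prod>r\<in>{1..t}. lik j (sig r j w) thstar))
       = ln (\<Prod>r\<in>{1..t}. lik j (sig r j w) thtilde) - ln (\<Prod>r\<in>{1..t}. lik j (sig r j w) thstar)"
      using pos thtilde_in thstar_in by (intro ln_divide_pos prod_pos; auto)
    also have "\<dots> = (\<Sum>r\<in>{1..t}. ln (lik j (sig r j w) thtilde)) - (\<Sum>r\<in>{1..t}. ln (lik j (sig r j w) thstar))"
      using pos thtilde_in thstar_in by (subst (1 2) ln_prod) (auto dest: less_imp_neq[symmetric] simp del: of_nat_Suc)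
    also have "\<dots> = ell j t w" unfolding ell_def sum_subtractf[symmetric]
      using pos thtilde_in thstar_in by (intro sum.cong refl ln_divide_pos[symmetric]) auto
    finally show ?thesis .
  qed
  have step: "Pt (Suc t) j w \<le> Mx t w + ell j (Suc t) w" if j: "j \<in> V - F" and w: "w \<in> space M" for t j w
  proof -
    define N where "N = incoming E j"
    define h where "h = (\<lambda>x. if x \<in> F then adv (Suc t) x j thtilde thstar w else Pt t x w)"
    define A where "A = image_mset h (mset_set N)"
    define m where "m = Mx t w"
    have NV: "N \<subseteq> V" using E_sub by (auto simp: N_def incoming_def)
    have Nfin: "finite N" using NV V_fin by (rule finite_subset)
    have "size (filter_mset (\<lambda>x. x > m) A) = card {x\<in>N. h x > m}"
      unfolding A_def filter_mset_image_mset using Nfin by simp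
    also have "\<dots> \<le> card F"
    proof (rule card_mono[OF Ffin])
      show "{x\<in>N. h x > m} \<subseteq> F"
      proof
        fix x assume x: "x \<in> {x\<in>N. h x > m}"
        show "x \<in> F"
        proof (rule ccontr)
          assume "x \<notin> F"
          with x NV have "x \<in> V - F" "h x = Pt t x w" by (auto simp: h_def)
          with Pt_le_Mx[of x t w] x show False by (auto simp: m_def)
        qed
      qed
    qed
    finally have "size (filter_mset (\<lambda>x. x > m) A) \<le> f" using F_card by simp
    then have tr: "trim_sum f A \<le> real (size A - 2*f) * m" by (rule trim_le)
    have own: "Pt t j w \<le> m" using Pt_le_Mx[OF j] by (simp add: m_def)
    have "(trim_sum f A + Pt t j w) / (real (size A - 2 * f) + 1) \<le>
          (real (size A - 2*f) * m + m) / (real (size A - 2 * f) + 1)"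
      using tr own by (intro divide_right_mono) auto
    also have "\<dots> = m" by (simp add: field_simps)
    finally have avg: "(trim_sum f A + Pt t j w) / (real (size A - 2 * f) + 1) \<le> m" .
    have "Pt (Suc t) j w = (trim_sum f A + Pt t j w) / (real (size A - 2 * f) + 1)
        + ln ((\<Prod>r\<in>{1..Suc t}. lik j (sig r j w) thtilde) / (\<Prod>r\<in>{1..Suc t}. lik j (sig r j w) thstar))"
      unfolding Pt_def A_def h_def N_def by (simp add: Let_def Pt_def)
    also have "\<dots> = (trim_sum f A + Pt t j w) / (real (size A - 2 * f) + 1) + ell j (Suc t) w"
      using j w by (subst logterm) auto
    finally show ?thesis using avg by (simp add: m_def)
  qed
  have AEell: "AE w in M. eventually (\<lambda>t. ell j t w \<le> 0) sequentially" if j: "j \<in> V - F" for j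
  proof -
    have jV: "j \<in> V" using j by simp
    have ind0: "indep_vars (\<lambda>(t, j). count_space (S j)) (\<lambda>(t, j). sig t j) ((\<lambda>r. (r, j)) ` {1..})"
      using sig_indep by (rule indep_vars_subset) (use jV in auto)
    have ind: "indep_vars (\<lambda>_. count_space (S j)) (\<lambda>r. sig r j) {1..}"
      using indep_vars_reindex[OF ind0] by (simp add: inj_on_def)
    show ?thesis unfolding ell_def
      by (rule ev_nonpos[OF M_prob S_fin[OF jV]])
         (use lik_pos[OF jV] lik_sum[OF jV] thtilde_in thstar_in sig_meas[OF _ jV] ind sig_distr[OF _ jV] in auto)
  qed
  have AEall: "AE w in M. \<forall>j\<in>V - F. eventually (\<lambda>t. ell j t w \<le> 0) sequentially"
    using VFfin AEell by (rule AE_finite_allI)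
  have AEtop: "AE w in M. filterlim (\<lambda>t. Pt t i w) at_top sequentially"
    using conv[OF thstar_in ne[symmetric]] by (simp add: Pt_def)
  have "AE w in M. False"
    using AE_space AEall AEtop
  proof (eventually_elim)
    case (elim w)
    have w: "w \<in> space M" using elim(1) .
    have "eventually (\<lambda>t. \<forall>j\<in>V - F. ell j t w \<le> 0) sequentially"
      using VFfin elim(2) by (simp add: eventually_ball_finite)
    then obtain T where T: "\<And>t. t \<ge> T \<Longrightarrow> \<forall>j\<in>V - F. ell j t w \<le> 0"
      by (auto simp: eventually_sequentially)
    have dec: "Mx (Suc t) w \<le> Mx t w" if t: "t \<ge> T" for t
    proof -
      have "Pt (Suc t) j w \<le> Mx t w" if j: "j \<in> V - F" for j
      proof -
        have "ell j (Suc t) w \<le> 0" using T[of "Suc t"] t j by simp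
        then show ?thesis using step[OF j w, of t] by simp
      qed
      then show ?thesis unfolding Mx_def using VFfin i_nonfaulty
        by (subst Max_le_iff) (auto simp: Mx_def)
    qed
    have bound: "Mx t w \<le> Mx T w" if "t \<ge> T" for t
      using that
    proof (induction t rule: dec_induct)
      case base then show ?case by simp
    next
      case (step n) then show ?case using dec[of n] by simp
    qed
    have "eventually (\<lambda>t. Mx T w + 1 \<le> Pt t i w) sequentially"
      using elim(3) by (simp add: filterlim_at_top)
    then obtain N where N: "\<And>t. t \<ge> N \<Longrightarrow> Mx T w + 1 \<le> Pt t i w"
      by (auto simp: eventually_sequentially)
    have "Pt (max T N) i w \<le> Mx (max T N) w" by (rule Pt_le_Mx[OF i_nonfaulty])
    also have "\<dots> \<le> Mx T w" by (rule bound) simp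
    finally show False using N[of "max T N"] by simp
  qed
  then show False by (simp add: AE_False)
qed

end
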